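(* Let $\mathcal{U}\subset\mathbb{R}^d$ be a nonempty box $\{u:u_{\min}\le u\le u_{\max}\}$, let $L:\mathbb{R}^d\to\mathbb{R}$ be measurable, $u^*\in\mathcal{U}$, and let $\lambda^{\min},\lambda^{\max}>0$, $\eta\ge0$ be constants such that for all $u\in\mathcal{U}$ $$\lambda^{\min}|u-u^*|^2\le L(u)-L(u^* )\le\eta|u-u^*|+\lambda^{\max}|u-u^*|^2 .$$ Let $f$ be a probability measure on $\mathbb{R}^d$ supported in $\mathcal{U}$ with $u^*\in\operatorname{supp}(f)$, and fix $\alpha>0$. Then for every $\varepsilon>0$ and every $R_\varepsilon>0$ with $$R_\varepsilon\le\min\Big\{\varepsilon^2\frac{\lambda^{\min}}{8(\lambda^{\max}+\eta)},\,1\Big\},$$ it holds $$\big|m^\alpha_L[f]-u^*\big|\le\frac{\varepsilon}{2}+\frac{\exp\!\big(-\alpha\lambda^{\min}(\varepsilon/4)^2\big)}{f(B_{R_\varepsilon}(u^* ))}\,\mathrm{V}^*[f].$$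
   Context: For a probability measure $f$ on $\mathbb{R}^d$, $m^\alpha_L[f]:=\dfrac{\int u\,e^{-\alpha L(u)}f(du)}{\int e^{-\alpha L(u)}f(du)}$ and $\mathrm{V}^*[f]:=\int|u-u^*|\,f(du)$. $B_R(v)$ is the closed Euclidean ball of radius $R$ centered at $v$. In the paper, $L=L_n$ is the MPC loss, $u^*=u^*_{(n)}$, $\lambda^{\min},\lambda^{\max}$ are the extreme eigenvalues of $F_c^\top F_c+\nu I_d$ and $\eta=|\eta^{1,*}_{(n)}|+|\eta^{2,*}_{(n)}|$ is the sum of norms of the Lagrange multipliers. *)

theory Defs
  imports "HOL-Probability.Probability"
begin

definition consensus_point ::
  "'a::euclidean_space measure \<Rightarrow> real \<Rightarrow> ('a \<Rightarrow> real) \<Rightarrow> 'a" where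
  "consensus_point f \<alpha> L =
     (1 / (\<integral>u. exp (- \<alpha> * L u) \<partial>f)) *\<^sub>R (\<integral>u. exp (- \<alpha> * L u) *\<^sub>R u \<partial>f)"

definition Vstar :: "'a::euclidean_space measure \<Rightarrow> 'a \<Rightarrow> real" where
  "Vstar f ustar = (\<integral>u. norm (u - ustar) \<partial>f)"

definition msupp :: "'a::euclidean_space measure \<Rightarrow> 'a set" where
  "msupp f = {x. \<forall>r>0. emeasure f (ball x r) > 0}"

end

theory Submission
  imports Defs
begin

theorem mainTheorem2:
  fixes umin umax ustar :: "'a::euclidean_space"
    and L :: "'a \<Rightarrow> real"
    and f :: "'a measure"
    and lmin lmax \<eta> \<alpha> \<epsilon> R :: real
  assumes box_ne: "cbox umin umax \<noteq> {}"
    and L_meas: "L \<in> borel_measurable borel"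
    and ustar_in: "ustar \<in> cbox umin umax"
    and lmin_pos: "lmin > 0" and lmax_pos: "lmax > 0" and eta_nonneg: "\<eta> \<ge> 0"
    and L_bounds: "\<And>u. u \<in> cbox umin umax \<Longrightarrow>
        lmin * (norm (u - ustar))\<^sup>2 \<le> L u - L ustar \<and>
        L u - L ustar \<le> \<eta> * norm (u - ustar) + lmax * (norm (u - ustar))\<^sup>2"
    and f_prob: "prob_space f"
    and f_sets: "sets f = sets borel"
    and f_supp: "emeasure f (UNIV - cbox umin umax) = 0"
    and ustar_supp: "ustar \<in> msupp f"
    and alpha_pos: "\<alpha> > 0"
    and eps_pos: "\<epsilon> > 0"
    and R_pos: "R > 0"
    and R_le: "R \<le> min (\<epsilon>\<^sup>2 * lmin / (8 * (lmax + \<eta>))) 1"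
  shows "norm (consensus_point f \<alpha> L - ustar)
           \<le> \<epsilon> / 2 + exp (- \<alpha> * lmin * (\<epsilon> / 4)\<^sup>2) / measure f (cball ustar R) * Vstar f ustar"
proof -
  interpret P: prob_space f by (rule f_prob)
  have sp: "space f = UNIV" using sets_eq_imp_space_eq[OF f_sets] by simp
  have mc: "\<And>h. h \<in> borel_measurable borel \<Longrightarrow> h \<in> borel_measurable f"
    using measurable_cong_sets[OF f_sets refl] by blast
  have mcv: "\<And>h::'a\<Rightarrow>'a. h \<in> borel_measurable borel \<Longrightarrow> h \<in> borel_measurable f"
    using measurable_cong_sets[OF f_sets refl] by blast
  define c where "c = L ustar"
  define g where "g = (\<lambda>u. exp (- \<alpha> * L u))"
  define Z where "Z = (\<integral>u. g u \<partial>f)"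
  define V where "V = Vstar f ustar"
  define P where "P = measure f (cball ustar R)"
  define r where "r = \<epsilon> / 2"
  define K where "K = \<epsilon>\<^sup>2 * lmin / 8"
  have AEbox: "AE u in f. u \<in> cbox umin umax"
    by (rule AE_I[of _ _ "UNIV - cbox umin umax"]) (auto simp: f_supp f_sets sp)
  obtain B where B: "\<And>u. u \<in> cbox umin umax \<Longrightarrow> norm u \<le> B"
    using bounded_cbox[of umin umax] unfolding bounded_iff by blast
  have gm: "g \<in> borel_measurable f" unfolding g_def
    by (intro mc) (use L_meas in measurable)
  have gup: "g u \<le> exp (- \<alpha> * c) * exp (- \<alpha> * lmin * (norm (u - ustar))\<^sup>2)"
    if "u \<in> cbox umin umax" for u
  proof -
    have "lmin * (norm (u - ustar))\<^sup>2 \<le> L u - c" using L_bounds[OF that] c_def by simp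
    then have "\<alpha> * (lmin * (norm (u - ustar))\<^sup>2) \<le> \<alpha> * (L u - c)"
      using alpha_pos by (intro mult_left_mono) auto
    then have "- \<alpha> * L u \<le> - \<alpha> * c + (- \<alpha> * lmin * (norm (u - ustar))\<^sup>2)"
      by (simp add: algebra_simps)
    then show ?thesis unfolding g_def by (simp add: exp_add[symmetric])
  qed
  have gbd: "g u \<le> exp (- \<alpha> * c)" if "u \<in> cbox umin umax" for u
  proof -
    have "exp (- \<alpha> * lmin * (norm (u - ustar))\<^sup>2) \<le> 1"
      using alpha_pos lmin_pos by simp
    then have "exp (- \<alpha> * c) * exp (- \<alpha> * lmin * (norm (u - ustar))\<^sup>2) \<le> exp (- \<alpha> * c) * 1"
      by (intro mult_left_mono) auto
    then show ?thesis using gup[OF that] by linarith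
  qed
  have gpos: "\<And>u. g u > 0" unfolding g_def by simp
  have gint: "integrable f g"
  proof (rule P.integrable_const_bound[where B="exp (- \<alpha> * c)"])
    show "AE x in f. norm (g x) \<le> exp (- \<alpha> * c)"
      using AEbox
    proof (rule AE_mp, intro AE_I2 impI)
      fix x assume "x \<in> cbox umin umax"
      then show "norm (g x) \<le> exp (- \<alpha> * c)"
        using gbd gpos[of x] by simp
    qed
  qed (rule gm)
  have dm: "(\<lambda>u. norm (u - ustar)) \<in> borel_measurable f"
    by (intro mc) measurable
  have dint: "integrable f (\<lambda>u. norm (u - ustar))"
  proof (rule P.integrable_const_bound[where B="B + norm ustar"])
    show "AE x in f. norm (norm (x - ustar)) \<le> B + norm ustar"
      using AEbox
    proof (rule AE_mp, intro AE_I2 impI)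
      fix x assume "x \<in> cbox umin umax"
      then show "norm (norm (x - ustar)) \<le> B + norm ustar"
        using B[of x] norm_triangle_ineq4[of x ustar] by simp
    qed
  qed (rule dm)
  have gvm: "(\<lambda>u. g u *\<^sub>R u) \<in> borel_measurable f"
    unfolding g_def by (intro mcv) (use L_meas in measurable)
  have gvint: "integrable f (\<lambda>u. g u *\<^sub>R u)"
  proof (rule P.integrable_const_bound[where B="exp (- \<alpha> * c) * B"])
    show "AE x in f. norm (g x *\<^sub>R x) \<le> exp (- \<alpha> * c) * B"
      using AEbox
    proof (rule AE_mp, intro AE_I2 impI)
      fix x assume "x \<in> cbox umin umax"
      then show "norm (g x *\<^sub>R x) \<le> exp (- \<alpha> * c) * B"
        using gbd B gpos by (simp add: less_imp_le mult_mono)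
    qed
  qed (rule gvm)
  have Zpos_lb: "Z \<ge> exp (- \<alpha> * c) * exp (- \<alpha> * K) * P"
  proof -
    have "exp (- \<alpha> * c) * exp (- \<alpha> * K) * P
        = (\<integral>u. exp (- \<alpha> * c) * exp (- \<alpha> * K) * indicator (cball ustar R) u \<partial>f)"
      unfolding P_def using P.emeasure_finite[of "cball ustar R"] by (simp add: f_sets less_top)
    also have "\<dots> \<le> Z" unfolding Z_def
    proof (rule integral_mono_AE)
      show "integrable f (\<lambda>u. exp (- \<alpha> * c) * exp (- \<alpha> * K) * indicator (cball ustar R) u)"
        by (intro integrable_mult_right integrable_real_indicator) (auto simp: f_sets top.not_eq_extremum[symmetric])
      show "AE u in f. exp (- \<alpha> * c) * exp (- \<alpha> * K) * indicator (cball ustar R) u \<le> g u"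
        using AEbox
      proof (rule AE_mp, intro AE_I2 impI)
        fix u assume ub: "u \<in> cbox umin umax"
        show "exp (- \<alpha> * c) * exp (- \<alpha> * K) * indicator (cball ustar R) u \<le> g u"
        proof (cases "u \<in> cball ustar R")
          case False then show ?thesis using gpos by (simp add: less_imp_le)
        next
          case True
          define d where "d = norm (u - ustar)"
          have d0: "0 \<le> d" "d \<le> R" using True by (auto simp: d_def dist_norm norm_minus_commute)
          have "d * d \<le> R * 1" using d0 R_le by (intro mult_mono) auto
          then have "d\<^sup>2 \<le> R" by (simp add: power2_eq_square)
          have "lmax * d\<^sup>2 \<le> lmax * R" using \<open>d\<^sup>2 \<le> R\<close> lmax_pos by simp
          moreover have "\<eta> * d \<le> \<eta> * R" using d0 eta_nonneg by (simp add: mult_left_mono)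
          moreover have "(lmax + \<eta>) * R \<le> K"
          proof -
            have "R \<le> \<epsilon>\<^sup>2 * lmin / (8 * (lmax + \<eta>))" using R_le by simp
            then show ?thesis unfolding K_def using lmax_pos eta_nonneg
              by (simp add: field_simps)
          qed
          moreover have "(lmax + \<eta>) * R = lmax * R + \<eta> * R" by (simp add: distrib_right)
          moreover have "L u - c \<le> \<eta> * d + lmax * d\<^sup>2"
            using L_bounds[OF ub] by (simp add: c_def d_def)
          ultimately have "L u - c \<le> K" by linarith
          then have "\<alpha> * (L u - c) \<le> \<alpha> * K" using alpha_pos by (intro mult_left_mono) auto
          then have "- \<alpha> * c + - \<alpha> * K \<le> - \<alpha> * L u"
            by (simp add: algebra_simps)
          then show ?thesis using True unfolding g_def by (simp add: exp_add[symmetric])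
        qed
      qed
    qed (rule gint)
    finally show ?thesis .
  qed
  have Ppos: "P > 0"
  proof -
    have "emeasure f (ball ustar R) > 0" using ustar_supp R_pos unfolding msupp_def by simp
    moreover have "emeasure f (ball ustar R) \<le> emeasure f (cball ustar R)"
      by (rule emeasure_mono) (auto simp: f_sets)
    ultimately have "emeasure f (cball ustar R) > 0" by simp
    then show ?thesis unfolding P_def by (simp add: P.emeasure_eq_measure)
  qed
  have "exp (- \<alpha> * c) * exp (- \<alpha> * K) * P > 0" using Ppos by simp
  then have Zpos: "Z > 0" using Zpos_lb by linarith
  have V0: "V \<ge> 0" unfolding V_def Vstar_def by simp
  have eq: "consensus_point f \<alpha> L - ustar = (1 / Z) *\<^sub>R (\<integral>u. g u *\<^sub>R (u - ustar) \<partial>f)"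
  proof -
    have "(\<integral>u. g u *\<^sub>R (u - ustar) \<partial>f) = (\<integral>u. g u *\<^sub>R u - g u *\<^sub>R ustar \<partial>f)"
      by (simp add: scaleR_diff_right)
    also have "\<dots> = (\<integral>u. g u *\<^sub>R u \<partial>f) - Z *\<^sub>R ustar"
      using gvint gint unfolding Z_def by (simp add: Bochner_Integration.integral_diff[OF gvint integrable_scaleR_left[OF gint]])
    finally have h: "(\<integral>u. g u *\<^sub>R (u - ustar) \<partial>f) = (\<integral>u. g u *\<^sub>R u \<partial>f) - Z *\<^sub>R ustar" .
    have cp: "consensus_point f \<alpha> L = (1 / Z) *\<^sub>R (\<integral>u. g u *\<^sub>R u \<partial>f)"
      unfolding consensus_point_def Z_def g_def by simp
    show ?thesis using Zpos unfolding cp h by (simp add: scaleR_diff_right)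
  qed
  define E where "E = exp (- \<alpha> * lmin * r\<^sup>2)"
  have int2: "(\<integral>u. g u * norm (u - ustar) \<partial>f) \<le> r * Z + exp (- \<alpha> * c) * E * V"
  proof -
    have "(\<integral>u. g u * norm (u - ustar) \<partial>f)
        \<le> (\<integral>u. r * g u + exp (- \<alpha> * c) * E * norm (u - ustar) \<partial>f)"
    proof (rule integral_mono_AE')
      show "integrable f (\<lambda>u. r * g u + exp (- \<alpha> * c) * E * norm (u - ustar))"
        using gint dint by auto
      show "AE u in f. g u * norm (u - ustar) \<le> r * g u + exp (- \<alpha> * c) * E * norm (u - ustar)"
        using AEbox
      proof (rule AE_mp, intro AE_I2 impI)
        fix u assume ub: "u \<in> cbox umin umax"
        define d where "d = norm (u - ustar)"
        have E0: "E > 0" unfolding E_def by simp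
        show "g u * norm (u - ustar) \<le> r * g u + exp (- \<alpha> * c) * E * norm (u - ustar)"
        proof (cases "d < r")
          case True
          then have "g u * norm (u - ustar) \<le> r * g u" using gpos[of u] unfolding d_def
            by (simp add: less_imp_le mult.commute)
          moreover have "0 \<le> exp (- \<alpha> * c) * E * norm (u - ustar)" using E0 by simp
          ultimately show ?thesis by linarith
        next
          case False
          have r0: "r \<ge> 0" using eps_pos r_def by simp
          have "r\<^sup>2 \<le> d\<^sup>2" using False r0 by (intro power_mono) auto
          then have "(\<alpha> * lmin) * r\<^sup>2 \<le> (\<alpha> * lmin) * d\<^sup>2" using alpha_pos lmin_pos
            by (intro mult_left_mono) auto
          then have "- \<alpha> * lmin * d\<^sup>2 \<le> - \<alpha> * lmin * r\<^sup>2" by simp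
          then have "exp (- \<alpha> * c) * exp (- \<alpha> * lmin * d\<^sup>2) \<le> exp (- \<alpha> * c) * E"
            unfolding E_def by (intro mult_left_mono) auto
          then have "g u \<le> exp (- \<alpha> * c) * E" using gup[OF ub] unfolding d_def
            by linarith
          then have "g u * norm (u - ustar) \<le> exp (- \<alpha> * c) * E * norm (u - ustar)"
            by (rule mult_right_mono) auto
          moreover have "0 \<le> r * g u" using r0 gpos[of u] by simp
          ultimately show ?thesis by linarith
        qed
      qed
      show "AE u in f. 0 \<le> r * g u + exp (- \<alpha> * c) * E * norm (u - ustar)"
        using eps_pos r_def gpos unfolding E_def by (auto intro!: AE_I2 simp: less_imp_le)
    qed
    also have "\<dots> = r * Z + exp (- \<alpha> * c) * E * V"
      using gint dint unfolding Z_def V_def Vstar_def by simp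
    finally show ?thesis .
  qed
  have nb: "norm (\<integral>u. g u *\<^sub>R (u - ustar) \<partial>f) \<le> (\<integral>u. g u * norm (u - ustar) \<partial>f)"
  proof -
    have "norm (\<integral>u. g u *\<^sub>R (u - ustar) \<partial>f) \<le> (\<integral>u. norm (g u *\<^sub>R (u - ustar)) \<partial>f)"
      by (rule integral_norm_bound)
    also have "\<dots> = (\<integral>u. g u * norm (u - ustar) \<partial>f)"
      using gpos by (simp add: less_imp_le)
    finally show ?thesis .
  qed
  have "norm (consensus_point f \<alpha> L - ustar) \<le> (r * Z + exp (- \<alpha> * c) * E * V) / Z"
  proof -
    have "norm (consensus_point f \<alpha> L - ustar) = norm (\<integral>u. g u *\<^sub>R (u - ustar) \<partial>f) / Z"
      using Zpos unfolding eq by simp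
    also have "\<dots> \<le> (r * Z + exp (- \<alpha> * c) * E * V) / Z"
      using nb int2 Zpos by (intro divide_right_mono) auto
    finally show ?thesis .
  qed
  also have "\<dots> = r + exp (- \<alpha> * c) * E * V / Z" using Zpos by (simp add: field_simps)
  also have "\<dots> \<le> r + exp (- \<alpha> * c) * E * V / (exp (- \<alpha> * c) * exp (- \<alpha> * K) * P)"
    using Zpos_lb Zpos Ppos V0 unfolding E_def
    by (intro add_left_mono divide_left_mono mult_nonneg_nonneg mult_pos_pos) auto
  also have "\<dots> = r + (E / exp (- \<alpha> * K)) / P * V" by (simp add: field_simps)
  also have "\<dots> \<le> \<epsilon> / 2 + exp (- \<alpha> * lmin * (\<epsilon> / 4)\<^sup>2) / P * V"
  proof -
    have "E / exp (- \<alpha> * K) = exp (- \<alpha> * lmin * r\<^sup>2 + \<alpha> * K)"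
      unfolding E_def by (simp add: exp_diff[symmetric])
    also have "\<dots> \<le> exp (- \<alpha> * lmin * (\<epsilon> / 4)\<^sup>2)"
    proof -
      have "- \<alpha> * lmin * r\<^sup>2 + \<alpha> * K = - \<alpha> * lmin * (\<epsilon>\<^sup>2 / 8)"
        unfolding r_def K_def by (simp add: field_simps power2_eq_square)
      moreover have "\<alpha> * lmin * (\<epsilon>\<^sup>2 / 16) \<le> \<alpha> * lmin * (\<epsilon>\<^sup>2 / 8)"
        using alpha_pos lmin_pos by (intro mult_left_mono) auto
      ultimately show ?thesis by (simp add: power_divide)
    qed
    finally show ?thesis unfolding r_def using Ppos V0
      by (intro add_left_mono mult_right_mono divide_right_mono) auto
  qed
  finally show ?thesis unfolding P_def V_def .
qed

end
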